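(* Let $n\ge1$ and $p$ a prime. The radical $\mathcal{R}(n,p)$ of the $p$-modular descent algebra $\Sigma(n,p)$ is contained in the kernel of the homomorphism $\phi:\Sigma(n,p)\to G(n,p)$.
   Context: A composition of $n$ is a sequence of positive integers with sum $n$. The descent algebra $\Sigma_n$ has basis $\{B_q\}$ indexed by compositions of $n$ with multiplication $B_qB_r=\sum_{Z\in S(q,r)}B_{c(Z)}$, where for $q=[a_1,\dots,a_s]$, $r=[b_1,\dots,b_t]$, $S(q,r)$ is the set of $s\times t$ non-negative integer matrices with row sums $a_i$ and column sums $b_j$, and $c(Z)$ is the composition obtained by reading the entries of $Z$ row by row and omitting zeros. Let $\mathcal{Z}_n$ be the subring of integral combinations of the $B_q$ and $\Sigma(n,p)=\mathcal{Z}_n/p\mathcal{Z}_n$, an $\mathbb{F}_p$-algebra with basis $\overline{B}_q$ (images of $B_q$); $\mathcal{R}(n,p)$ denotes its (Jacobson) radical. For a composition $q=[a_1,\dots,a_r]$ let $\chi_q$ be the permutation character of $S_n$ induced from the trivial character of the Young subgroup $S_{a_1}\times\cdots\times S_{a_r}$, let $G_n$ be the ring (under pointwise operations) of integral combinations of the $\chi_q$, and let $G(n,p)$ be the $\mathbb{F}_p$-algebra obtained by reducing all character values of elements of $G_n$ modulo $p$; write $\tilde\chi_q$ for the reduction of $\chi_q$. The map $\phi:\Sigma(n,p)\to G(n,p)$ is the $\mathbb{F}_p$-linear map with $\phi(\overline{B}_q)=\tilde\chi_q$ for all compositions $q$; it is a surjective homomorphism of $\mathbb{F}_p$-algebras (as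 a consequence of Solomon's theorem that $B_q\mapsto\chi_q$ defines a ring homomorphism $\mathcal{Z}_n\to G_n$). *)

theory Defs
  imports Main "HOL-Library.FuncSet" "HOL-Combinatorics.Permutations" "HOL-Computational_Algebra.Primes"
begin

definition compositions :: "nat \<Rightarrow> nat list set" where
  "compositions n = {q. 0 \<notin> set q \<and> sum_list q = n}"

definition Smat :: "nat list \<Rightarrow> nat list \<Rightarrow> nat list list set" where
  "Smat q r = {Z. length Z = length q
      \<and> (\<forall>i < length q. length (Z ! i) = length r \<and> sum_list (Z ! i) = q ! i)
      \<and> (\<forall>j < length r. (\<Sum>i<length q. Z ! i ! j) = r ! j)}"

definition cZ :: "nat list list \<Rightarrow> nat list" where
  "cZ Z = filter (\<lambda>a. a \<noteq> 0) (concat Z)"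

text \<open>Sigma(n,p), realised over a field 'k with p elements: elements are
  coefficient functions on compositions of n (zero elsewhere), the coefficient of
  q being the coefficient of the basis element B_q.\<close>
definition desc_carrier :: "nat \<Rightarrow> (nat list \<Rightarrow> 'k::field) set" where
  "desc_carrier n = {x. \<forall>q. q \<notin> compositions n \<longrightarrow> x q = 0}"

text \<open>Bilinear extension of B_q B_r = sum over Z in S(q,r) of B_{c(Z)}.\<close>
definition desc_mult :: "nat \<Rightarrow> (nat list \<Rightarrow> 'k::field) \<Rightarrow> (nat list \<Rightarrow> 'k) \<Rightarrow> (nat list \<Rightarrow> 'k)" where
  "desc_mult n x y = (\<lambda>s. \<Sum>q\<in>compositions n. \<Sum>r\<in>compositions n.
       x q * y r * of_nat (card {Z \<in> Smat q r. cZ Z = s}))"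

definition desc_left_ideal :: "nat \<Rightarrow> (nat list \<Rightarrow> 'k::field) set \<Rightarrow> bool" where
  "desc_left_ideal n I \<longleftrightarrow> I \<subseteq> desc_carrier n \<and> (\<lambda>q. 0) \<in> I
     \<and> (\<forall>a\<in>I. \<forall>b\<in>I. (\<lambda>q. a q + b q) \<in> I)
     \<and> (\<forall>c a. a \<in> I \<longrightarrow> (\<lambda>q. c * a q) \<in> I)
     \<and> (\<forall>y\<in>desc_carrier n. \<forall>a\<in>I. desc_mult n y a \<in> I)"

definition desc_maximal_left_ideal :: "nat \<Rightarrow> (nat list \<Rightarrow> 'k::field) set \<Rightarrow> bool" where
  "desc_maximal_left_ideal n I \<longleftrightarrow> desc_left_ideal n I \<and> I \<noteq> desc_carrier n
     \<and> (\<forall>J. desc_left_ideal n J \<and> I \<subseteq> J \<longrightarrow> J = I \<or> J = desc_carrier n)"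

definition desc_radical :: "nat \<Rightarrow> (nat list \<Rightarrow> 'k::field) set" where
  "desc_radical n = desc_carrier n \<inter> \<Inter> {I. desc_maximal_left_ideal n I}"

text \<open>Permutation character chi_q of S_n (acting on {0..<n}) induced from the trivial
  character of the Young subgroup: the number of cosets fixed by sigma, i.e. the number
  of ordered set partitions (maps f into {0..<length q} with fibre sizes q!i) that are
  sigma-invariant.\<close>
definition chi :: "nat \<Rightarrow> nat list \<Rightarrow> (nat \<Rightarrow> nat) \<Rightarrow> nat" where
  "chi n q \<sigma> = card {f \<in> {0..<n} \<rightarrow>\<^sub>E {0..<length q}.
      (\<forall>i < length q. card {k \<in> {0..<n}. f k = i} = q ! i)
      \<and> (\<forall>k < n. f (\<sigma> k) = f k)}"

definition desc_phi :: "nat \<Rightarrow> (nat list \<Rightarrow> 'k::field) \<Rightarrow> (nat \<Rightarrow> nat) \<Rightarrow> 'k" where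
  "desc_phi n x \<sigma> = (\<Sum>q\<in>compositions n. x q * of_nat (chi n q \<sigma>))"

end

theory Submission
  imports Defs
begin

definition Nset :: "nat set \<Rightarrow> (nat \<Rightarrow> nat) \<Rightarrow> 'i set \<Rightarrow> ('i \<Rightarrow> nat) \<Rightarrow> (nat \<Rightarrow> 'i) set" where
  "Nset A \<sigma> I w = {h \<in> A \<rightarrow>\<^sub>E I. (\<forall>i\<in>I. card {k\<in>A. h k = i} = w i) \<and> (\<forall>k\<in>A. h (\<sigma> k) = h k)}"

lemma Nset_finite: "finite A \<Longrightarrow> finite I \<Longrightarrow> finite (Nset A \<sigma> I w)"
  unfolding Nset_def by (rule finite_subset[OF _ finite_PiE]) auto

lemma Nset_relabel_le:
  assumes A: "finite A" and J: "finite J" and sA: "\<forall>k\<in>A. \<sigma> k \<in> A"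
    and e: "bij_betw e I J" and w: "\<forall>i\<in>I. w i = w' (e i)"
  shows "card (Nset A \<sigma> I w) \<le> card (Nset A \<sigma> J w')"
proof -
  let ?F = "\<lambda>h. restrict (e \<circ> h) A"
  have inj: "inj_on ?F (Nset A \<sigma> I w)"
  proof (rule inj_onI)
    fix h1 h2 assume h1: "h1 \<in> Nset A \<sigma> I w" and h2: "h2 \<in> Nset A \<sigma> I w" and eq: "?F h1 = ?F h2"
    show "h1 = h2"
    proof
      fix k show "h1 k = h2 k"
      proof (cases "k \<in> A")
        case True
        then have "e (h1 k) = e (h2 k)" using fun_cong[OF eq, of k] by simp
        moreover have "h1 k \<in> I" "h2 k \<in> I" using h1 h2 True by (auto simp: Nset_def)
        ultimately show ?thesis using e by (auto simp: bij_betw_def inj_on_def)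
      next
        case False then show ?thesis using h1 h2 by (auto simp: Nset_def PiE_def extensional_def)
      qed
    qed
  qed
  have sub: "?F ` Nset A \<sigma> I w \<subseteq> Nset A \<sigma> J w'"
  proof
    fix g assume "g \<in> ?F ` Nset A \<sigma> I w"
    then obtain h where h: "h \<in> Nset A \<sigma> I w" and g: "g = ?F h" by blast
    have hI: "\<forall>k\<in>A. h k \<in> I" using h by (auto simp: Nset_def)
    have "g \<in> A \<rightarrow>\<^sub>E J" using hI e g by (auto simp: bij_betw_def)
    moreover have "\<forall>j\<in>J. card {k\<in>A. g k = j} = w' j"
    proof
      fix j assume "j \<in> J"
      then obtain i where i: "i \<in> I" "j = e i" using e by (auto simp: bij_betw_def)
      have "{k\<in>A. g k = j} = {k\<in>A. h k = i}"
        using i hI e g by (auto simp: bij_betw_def inj_on_def)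
      then show "card {k\<in>A. g k = j} = w' j" using h i w by (auto simp: Nset_def)
    qed
    moreover have "\<forall>k\<in>A. g (\<sigma> k) = g k" using h sA g by (auto simp: Nset_def)
    ultimately show "g \<in> Nset A \<sigma> J w'" by (auto simp: Nset_def)
  qed
  show ?thesis using card_inj_on_le[OF inj sub Nset_finite[OF A J]] .
qed

lemma Nset_relabel:
  assumes "finite A" "finite I" "finite J" "\<forall>k\<in>A. \<sigma> k \<in> A" "bij_betw e I J" "\<forall>i\<in>I. w i = w' (e i)"
  shows "card (Nset A \<sigma> I w) = card (Nset A \<sigma> J w')"
proof (rule antisym)
  show "card (Nset A \<sigma> I w) \<le> card (Nset A \<sigma> J w')" using Nset_relabel_le assms by blast
  have e': "bij_betw (inv_into I e) J I" using assms(5) by (rule bij_betw_inv_into)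
  have "\<forall>j\<in>J. w' j = w (inv_into I e j)"
  proof
    fix j assume j: "j \<in> J"
    then have "j \<in> e ` I" using assms(5) by (auto simp: bij_betw_def)
    then show "w' j = w (inv_into I e j)" using assms(6) by (simp add: f_inv_into_f inv_into_into)
  qed
  then show "card (Nset A \<sigma> J w') \<le> card (Nset A \<sigma> I w)" using Nset_relabel_le[OF assms(1,2,4) e'] by blast
qed

lemma Nset_nonzero:
  assumes A: "finite A"
  shows "Nset A \<sigma> I w = Nset A \<sigma> {i\<in>I. w i \<noteq> 0} w"
proof
  show "Nset A \<sigma> I w \<subseteq> Nset A \<sigma> {i\<in>I. w i \<noteq> 0} w"
  proof
    fix h assume h: "h \<in> Nset A \<sigma> I w"
    have "\<forall>k\<in>A. w (h k) \<noteq> 0"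
    proof
      fix k assume k: "k \<in> A"
      have "k \<in> {k'\<in>A. h k' = h k}" using k by simp
      then have "card {k'\<in>A. h k' = h k} \<noteq> 0" using A by (auto simp: card_eq_0_iff)
      moreover have "h k \<in> I" using h k by (auto simp: Nset_def)
      ultimately show "w (h k) \<noteq> 0" using h by (auto simp: Nset_def)
    qed
    then show "h \<in> Nset A \<sigma> {i\<in>I. w i \<noteq> 0} w" using h by (auto simp: Nset_def)
  qed
  show "Nset A \<sigma> {i\<in>I. w i \<noteq> 0} w \<subseteq> Nset A \<sigma> I w"
  proof
    fix h assume h: "h \<in> Nset A \<sigma> {i\<in>I. w i \<noteq> 0} w"
    have "\<forall>i\<in>I. card {k\<in>A. h k = i} = w i"
    proof
      fix i assume i: "i \<in> I"
      show "card {k\<in>A. h k = i} = w i"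
      proof (cases "w i = 0")
        case True
        then have e0: "{k\<in>A. h k = i} = {}" using h by (force simp: Nset_def PiE_iff)
        show ?thesis unfolding e0 using True by simp
      next
        case False then show ?thesis using h i by (auto simp: Nset_def)
      qed
    qed
    then show "h \<in> Nset A \<sigma> I w" using h by (auto simp: Nset_def)
  qed
qed

definition Hset :: "nat set \<Rightarrow> (nat \<Rightarrow> nat) \<Rightarrow> 'i set \<Rightarrow> 'j set \<Rightarrow> ('i \<Rightarrow> nat) \<Rightarrow> ('j \<Rightarrow> nat) \<Rightarrow> (nat \<Rightarrow> 'i \<times> 'j) set" where
  "Hset A \<sigma> I J u v = {h \<in> A \<rightarrow>\<^sub>E I \<times> J. (\<forall>k\<in>A. h (\<sigma> k) = h k)
      \<and> (\<forall>i\<in>I. card {k\<in>A. fst (h k) = i} = u i) \<and> (\<forall>j\<in>J. card {k\<in>A. snd (h k) = j} = v j)}"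

lemma restrict_fibre: "{k\<in>A. P (restrict F A k)} = {k\<in>A. P (F k)}"
  by auto

lemma coll_imp: "{k. (k \<in> A \<longrightarrow> P k) \<and> k \<in> A} = {k\<in>A. P k}"
  by auto

lemma Nset_pair:
  assumes A: "finite A" and sA: "\<forall>k\<in>A. \<sigma> k \<in> A"
  shows "card (Nset A \<sigma> I u) * card (Nset A \<sigma> J v) = card (Hset A \<sigma> I J u v)"
proof -
  have "bij_betw (\<lambda>(f,g). restrict (\<lambda>k. (f k, g k)) A) (Nset A \<sigma> I u \<times> Nset A \<sigma> J v) (Hset A \<sigma> I J u v)"
  proof (rule bij_betw_byWitness[where f'="\<lambda>h. (restrict (fst \<circ> h) A, restrict (snd \<circ> h) A)"])
    show "\<forall>a\<in>Nset A \<sigma> I u \<times> Nset A \<sigma> J v.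
      (\<lambda>h. (restrict (fst \<circ> h) A, restrict (snd \<circ> h) A)) ((\<lambda>(f,g). restrict (\<lambda>k. (f k, g k)) A) a) = a"
      by (auto simp: Nset_def PiE_def extensional_def fun_eq_iff)
    show "\<forall>a'\<in>Hset A \<sigma> I J u v. (\<lambda>(f,g). restrict (\<lambda>k. (f k, g k)) A) ((\<lambda>h. (restrict (fst \<circ> h) A, restrict (snd \<circ> h) A)) a') = a'"
      by (auto simp: Hset_def PiE_def extensional_def fun_eq_iff)
    show "(\<lambda>(f,g). restrict (\<lambda>k. (f k, g k)) A) ` (Nset A \<sigma> I u \<times> Nset A \<sigma> J v) \<subseteq> Hset A \<sigma> I J u v"
      using sA by (auto simp: Nset_def Hset_def restrict_fibre coll_imp)
    show "(\<lambda>h. (restrict (fst \<circ> h) A, restrict (snd \<circ> h) A)) ` Hset A \<sigma> I J u v \<subseteq> Nset A \<sigma> I u \<times> Nset A \<sigma> J v"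
      using sA by (auto simp: Nset_def Hset_def restrict_fibre PiE_iff coll_imp)
  qed
  from bij_betw_same_card[OF this] show ?thesis by (simp only: card_cartesian_product)
qed

lemma fibre_sum_fst:
  assumes "finite A" "finite J" "\<forall>k\<in>A. h k \<in> I \<times> J"
  shows "card {k\<in>A. fst (h k) = i} = (\<Sum>j\<in>J. card {k\<in>A. h k = (i,j)})"
proof -
  have "{k\<in>A. fst (h k) = i} = (\<Union>j\<in>J. {k\<in>A. h k = (i,j)})" using assms(3) by force
  then have "card {k\<in>A. fst (h k) = i} = card (\<Union>j\<in>J. {k\<in>A. h k = (i,j)})" by simp
  also have "\<dots> = (\<Sum>j\<in>J. card {k\<in>A. h k = (i,j)})" using assms(1,2) by (intro card_UN_disjoint) auto
  finally show ?thesis .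
qed

lemma fibre_sum_snd:
  assumes "finite A" "finite I" "\<forall>k\<in>A. h k \<in> I \<times> J"
  shows "card {k\<in>A. snd (h k) = j} = (\<Sum>i\<in>I. card {k\<in>A. h k = (i,j)})"
proof -
  have "{k\<in>A. snd (h k) = j} = (\<Union>i\<in>I. {k\<in>A. h k = (i,j)})" using assms(3) by force
  then have "card {k\<in>A. snd (h k) = j} = card (\<Union>i\<in>I. {k\<in>A. h k = (i,j)})" by simp
  also have "\<dots> = (\<Sum>i\<in>I. card {k\<in>A. h k = (i,j)})" using assms(1,2) by (intro card_UN_disjoint) auto
  finally show ?thesis .
qed

lemma mem_le_sum_nat: "x \<in> set xs \<Longrightarrow> x \<le> sum_list (xs::nat list)"
  by (induction xs) auto

lemma sum_list_map_upt: "sum_list (map f [0..<t]) = (\<Sum>j\<in>{0..<t}. (f j::nat))"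
  by (induction t) auto

lemma Smat_finite: "finite (Smat q r)"
proof -
  let ?R = "{row::nat list. set row \<subseteq> {0..sum_list q} \<and> length row \<le> length r}"
  have fR: "finite ?R" by (rule finite_lists_length_le) simp
  have "Smat q r \<subseteq> {Z. set Z \<subseteq> ?R \<and> length Z \<le> length q}"
  proof
    fix Z assume Z: "Z \<in> Smat q r"
    have "set Z \<subseteq> ?R"
    proof
      fix row assume "row \<in> set Z"
      then obtain i where i: "i < length q" "row = Z ! i" using Z by (auto simp: Smat_def in_set_conv_nth)
      have "\<forall>x\<in>set row. x \<le> sum_list q"
      proof
        fix x assume "x \<in> set row"
        then have "x \<le> sum_list row" by (rule mem_le_sum_nat)
        also have "\<dots> = q ! i" using Z i by (auto simp: Smat_def)
        also have "\<dots> \<le> sum_list q" using i by (intro mem_le_sum_nat nth_mem)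
        finally show "x \<le> sum_list q" .
      qed
      then show "row \<in> ?R" using Z i by (auto simp: Smat_def)
    qed
    then show "Z \<in> {Z. set Z \<subseteq> ?R \<and> length Z \<le> length q}" using Z by (auto simp: Smat_def)
  qed
  moreover have "finite {Z. set Z \<subseteq> ?R \<and> length Z \<le> length q}" by (rule finite_lists_length_le[OF fR])
  ultimately show ?thesis by (rule finite_subset)
qed

lemma chi_Nset: "chi n q \<sigma> = card (Nset {0..<n} \<sigma> {0..<length q} (\<lambda>i. q ! i))"
  unfolding chi_def Nset_def by (rule arg_cong[where f=card]) auto

lemma Smat_shape:
  assumes "Z \<in> Smat q r"
  shows "Z = map (\<lambda>i. map (\<lambda>j. Z ! i ! j) [0..<length r]) [0..<length q]"
  using assms unfolding Smat_def by (auto intro!: nth_equalityI)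

lemma HZ_card:
  assumes Z: "Z \<in> Smat q r" and A: "finite A" and sA: "\<forall>k\<in>A. \<sigma> k \<in> A"
  shows "card (Nset A \<sigma> ({0..<length q} \<times> {0..<length r}) (\<lambda>(i,j). Z ! i ! j))
       = card (Nset A \<sigma> {0..<length (cZ Z)} (\<lambda>m. cZ Z ! m))"
proof -
  let ?w = "\<lambda>(i,j). Z ! i ! j"
  let ?L = "List.product [0..<length q] [0..<length r]"
  let ?PL = "filter (\<lambda>p. ?w p \<noteq> 0) ?L"
  have "concat Z = map ?w ?L"
    by (subst Smat_shape[OF Z]) (simp add: product_concat_map map_concat comp_def)
  then have cZ: "cZ Z = map ?w ?PL"
    by (simp add: cZ_def filter_map comp_def)
  have dist: "distinct ?PL" by (simp add: distinct_product)
  have setPL: "set ?PL = {p \<in> {0..<length q} \<times> {0..<length r}. ?w p \<noteq> 0}" by auto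
  have "card (Nset A \<sigma> ({0..<length q} \<times> {0..<length r}) ?w)
      = card (Nset A \<sigma> {p \<in> {0..<length q} \<times> {0..<length r}. ?w p \<noteq> 0} ?w)"
    using Nset_nonzero[OF A] by metis
  also have "\<dots> = card (Nset A \<sigma> {0..<length (cZ Z)} (\<lambda>m. cZ Z ! m))"
  proof (rule sym, rule Nset_relabel[OF A])
    show "bij_betw ((!) ?PL) {0..<length (cZ Z)} {p \<in> {0..<length q} \<times> {0..<length r}. ?w p \<noteq> 0}"
      using bij_betw_nth[OF dist _ setPL[symmetric]] cZ by (simp add: atLeast0LessThan)
    show "\<forall>i\<in>{0..<length (cZ Z)}. cZ Z ! i = ?w (?PL ! i)" using cZ by simp
  qed (use sA in auto)
  finally show ?thesis .
qed

lemma solomon: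
  assumes "\<sigma> permutes {0..<n}"
  shows "chi n q \<sigma> * chi n r \<sigma> = (\<Sum>Z\<in>Smat q r. chi n (cZ Z) \<sigma>)"
proof -
  let ?A = "{0..<n}" and ?I = "{0..<length q}" and ?J = "{0..<length r}"
  let ?HZ = "\<lambda>Z. Nset ?A \<sigma> (?I \<times> ?J) (\<lambda>(i,j). Z ! i ! j)"
  have sA: "\<forall>k\<in>?A. \<sigma> k \<in> ?A" using permutes_in_image[OF assms] by auto
  have fA: "finite ?A" by simp
  have eq: "Hset ?A \<sigma> ?I ?J (\<lambda>i. q ! i) (\<lambda>j. r ! j) = (\<Union>Z\<in>Smat q r. ?HZ Z)"
  proof
    show "Hset ?A \<sigma> ?I ?J (\<lambda>i. q ! i) (\<lambda>j. r ! j) \<subseteq> (\<Union>Z\<in>Smat q r. ?HZ Z)"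
    proof
      fix h assume h: "h \<in> Hset ?A \<sigma> ?I ?J (\<lambda>i. q ! i) (\<lambda>j. r ! j)"
      have hIJ: "\<forall>k\<in>?A. h k \<in> ?I \<times> ?J" using h by (auto simp: Hset_def)
      define Z where "Z = map (\<lambda>i. map (\<lambda>j. card {k\<in>?A. h k = (i,j)}) [0..<length r]) [0..<length q]"
      have "Z \<in> Smat q r"
        unfolding Smat_def
      proof (intro CollectI conjI allI impI)
        show "length Z = length q" by (simp add: Z_def)
      next
        fix i assume i: "i < length q"
        show "length (Z ! i) = length r" using i by (simp add: Z_def)
        have "sum_list (Z ! i) = (\<Sum>j\<in>?J. card {k\<in>?A. h k = (i,j)})"
          using i by (simp add: Z_def sum_list_map_upt)
        also have "\<dots> = card {k\<in>?A. fst (h k) = i}" using fibre_sum_fst[OF fA _ hIJ] by simp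
        also have "\<dots> = q ! i" using h i by (auto simp: Hset_def)
        finally show "sum_list (Z ! i) = q ! i" .
      next
        fix j assume j: "j < length r"
        have "(\<Sum>i<length q. Z ! i ! j) = (\<Sum>i\<in>?I. card {k\<in>?A. h k = (i,j)})"
          using j by (auto simp: Z_def atLeast0LessThan intro!: sum.cong)
        also have "\<dots> = card {k\<in>?A. snd (h k) = j}" using fibre_sum_snd[OF fA _ hIJ] by simp
        also have "\<dots> = r ! j" using h j by (auto simp: Hset_def)
        finally show "(\<Sum>i<length q. Z ! i ! j) = r ! j" .
      qed
      moreover have "h \<in> ?HZ Z" using h by (auto simp: Hset_def Nset_def Z_def)
      ultimately show "h \<in> (\<Union>Z\<in>Smat q r. ?HZ Z)" by blast
    qed
    show "(\<Union>Z\<in>Smat q r. ?HZ Z) \<subseteq> Hset ?A \<sigma> ?I ?J (\<lambda>i. q ! i) (\<lambda>j. r ! j)"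
    proof
      fix h assume "h \<in> (\<Union>Z\<in>Smat q r. ?HZ Z)"
      then obtain Z where Z: "Z \<in> Smat q r" and h: "h \<in> ?HZ Z" by blast
      have hIJ: "\<forall>k\<in>?A. h k \<in> ?I \<times> ?J" using h by (auto simp: Nset_def)
      have fib: "\<And>i j. i \<in> ?I \<Longrightarrow> j \<in> ?J \<Longrightarrow> card {k\<in>?A. h k = (i,j)} = Z ! i ! j"
        using h by (auto simp: Nset_def)
      have "\<forall>i\<in>?I. card {k\<in>?A. fst (h k) = i} = q ! i"
      proof
        fix i assume i: "i \<in> ?I"
        have "card {k\<in>?A. fst (h k) = i} = (\<Sum>j\<in>?J. Z ! i ! j)"
          using fibre_sum_fst[OF fA _ hIJ] fib i by simp
        also have "\<dots> = sum_list (Z ! i)" using Z i by (simp add: Smat_def sum_list_sum_nth)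
        also have "\<dots> = q ! i" using Z i by (simp add: Smat_def)
        finally show "card {k\<in>?A. fst (h k) = i} = q ! i" .
      qed
      moreover have "\<forall>j\<in>?J. card {k\<in>?A. snd (h k) = j} = r ! j"
      proof
        fix j assume j: "j \<in> ?J"
        have "card {k\<in>?A. snd (h k) = j} = (\<Sum>i\<in>?I. Z ! i ! j)"
          using fibre_sum_snd[OF fA _ hIJ] fib j by simp
        also have "\<dots> = r ! j" using Z j by (simp add: Smat_def atLeast0LessThan)
        finally show "card {k\<in>?A. snd (h k) = j} = r ! j" .
      qed
      ultimately show "h \<in> Hset ?A \<sigma> ?I ?J (\<lambda>i. q ! i) (\<lambda>j. r ! j)"
        using h by (auto simp: Nset_def Hset_def)
    qed
  qed
  have disj: "\<forall>Z1\<in>Smat q r. \<forall>Z2\<in>Smat q r. Z1 \<noteq> Z2 \<longrightarrow> ?HZ Z1 \<inter> ?HZ Z2 = {}"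
  proof (intro ballI impI)
    fix Z1 Z2 assume Z1: "Z1 \<in> Smat q r" and Z2: "Z2 \<in> Smat q r" and ne: "Z1 \<noteq> Z2"
    show "?HZ Z1 \<inter> ?HZ Z2 = {}"
    proof (rule ccontr)
      assume "?HZ Z1 \<inter> ?HZ Z2 \<noteq> {}"
      then obtain h where h1: "h \<in> ?HZ Z1" and h2: "h \<in> ?HZ Z2" by blast
      have eqs: "\<And>i j. i < length q \<Longrightarrow> j < length r \<Longrightarrow> Z1 ! i ! j = Z2 ! i ! j"
      proof -
        fix i j assume "i < length q" "j < length r"
        then have "card {k\<in>?A. h k = (i,j)} = Z1 ! i ! j" "card {k\<in>?A. h k = (i,j)} = Z2 ! i ! j"
          using h1 h2 by (auto simp: Nset_def)
        then show "Z1 ! i ! j = Z2 ! i ! j" by simp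
      qed
      have "map (\<lambda>i. map (\<lambda>j. Z1 ! i ! j) [0..<length r]) [0..<length q]
          = map (\<lambda>i. map (\<lambda>j. Z2 ! i ! j) [0..<length r]) [0..<length q]"
        by (simp add: eqs)
      then have "Z1 = Z2" using Smat_shape[OF Z1] Smat_shape[OF Z2] by simp
      with ne show False by simp
    qed
  qed
  have "chi n q \<sigma> * chi n r \<sigma> = card (Hset ?A \<sigma> ?I ?J (\<lambda>i. q ! i) (\<lambda>j. r ! j))"
    unfolding chi_Nset using Nset_pair[OF fA sA] by blast
  also have "\<dots> = (\<Sum>Z\<in>Smat q r. card (?HZ Z))"
    unfolding eq using Smat_finite disj by (intro card_UN_disjoint) (auto intro: Nset_finite)
  also have "\<dots> = (\<Sum>Z\<in>Smat q r. chi n (cZ Z) \<sigma>)"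
    by (rule sum.cong) (simp_all add: HZ_card[OF _ fA sA] chi_Nset)
  finally show ?thesis .
qed

lemma length_le_sum_list: "0 \<notin> set xs \<Longrightarrow> length xs \<le> sum_list (xs::nat list)"
  by (induction xs) auto

lemma compositions_finite: "finite (compositions n)"
proof -
  have "compositions n \<subseteq> {xs. set xs \<subseteq> {0..n} \<and> length xs \<le> n}"
  proof
    fix xs assume xs: "xs \<in> compositions n"
    then have "0 \<notin> set xs" "sum_list xs = n" by (auto simp: compositions_def)
    then have "length xs \<le> n" using length_le_sum_list by metis
    moreover have "set xs \<subseteq> {0..n}" using \<open>sum_list xs = n\<close> mem_le_sum_nat by fastforce
    ultimately show "xs \<in> {xs. set xs \<subseteq> {0..n} \<and> length xs \<le> n}" by simp
  qed
  moreover have "finite {xs. set xs \<subseteq> {0..n::nat} \<and> length xs \<le> n}" by (rule finite_lists_length_le) simp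
  ultimately show ?thesis by (rule finite_subset)
qed

lemma sum_list_filter_nz: "sum_list (filter (\<lambda>a. a \<noteq> 0) xs) = sum_list (xs::nat list)"
  by (induction xs) auto

lemma sum_list_concat_nat: "sum_list (concat Z) = sum_list (map sum_list (Z::nat list list))"
  by (induction Z) auto

lemma cZ_comp:
  assumes Z: "Z \<in> Smat q r" and q: "q \<in> compositions n"
  shows "cZ Z \<in> compositions n"
proof -
  have "map sum_list Z = q" using Z by (auto simp: Smat_def intro!: nth_equalityI)
  have "sum_list (cZ Z) = sum_list (concat Z)" by (simp only: cZ_def sum_list_filter_nz)
  also have "\<dots> = sum_list (map sum_list Z)" by (rule sum_list_concat_nat)
  also have "\<dots> = n" using q \<open>map sum_list Z = q\<close> by (simp add: compositions_def)
  finally have "sum_list (cZ Z) = n" .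
  then show ?thesis by (simp add: compositions_def cZ_def)
qed

lemma inner_sum:
  assumes q: "q \<in> compositions n" and \<sigma>: "\<sigma> permutes {0..<n}"
  shows "(\<Sum>s\<in>compositions n. of_nat (card {Z\<in>Smat q r. cZ Z = s}) * of_nat (chi n s \<sigma>))
         = (of_nat (chi n q \<sigma> * chi n r \<sigma>) :: 'k::field)"
proof -
  have "(\<Sum>s\<in>compositions n. card {Z\<in>Smat q r. cZ Z = s} * chi n s \<sigma>)
      = (\<Sum>s\<in>compositions n. \<Sum>Z\<in>{Z\<in>Smat q r. cZ Z = s}. chi n (cZ Z) \<sigma>)"
    by (rule sum.cong) auto
  also have "\<dots> = (\<Sum>Z\<in>Smat q r. chi n (cZ Z) \<sigma>)"
    using Smat_finite compositions_finite cZ_comp[OF _ q] by (intro sum.group) auto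
  also have "\<dots> = chi n q \<sigma> * chi n r \<sigma>" using solomon[OF \<sigma>] by simp
  finally have "(\<Sum>s\<in>compositions n. card {Z\<in>Smat q r. cZ Z = s} * chi n s \<sigma>) = chi n q \<sigma> * chi n r \<sigma>" .
  then have "(of_nat (\<Sum>s\<in>compositions n. card {Z\<in>Smat q r. cZ Z = s} * chi n s \<sigma>) :: 'k) = of_nat (chi n q \<sigma> * chi n r \<sigma>)"
    by simp
  then show ?thesis by simp
qed

lemma phi_mult:
  assumes \<sigma>: "\<sigma> permutes {0..<n}"
  shows "desc_phi n (desc_mult n y a) \<sigma> = desc_phi n y \<sigma> * desc_phi n (a :: nat list \<Rightarrow> 'k::field) \<sigma>"
proof -
  let ?C = "compositions n"
  have "desc_phi n (desc_mult n y a) \<sigma>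
     = (\<Sum>s\<in>?C. \<Sum>q\<in>?C. \<Sum>r\<in>?C. y q * a r * (of_nat (card {Z\<in>Smat q r. cZ Z = s}) * of_nat (chi n s \<sigma>)))"
    by (simp add: desc_phi_def desc_mult_def sum_distrib_right mult.assoc)
  also have "\<dots> = (\<Sum>q\<in>?C. \<Sum>s\<in>?C. \<Sum>r\<in>?C. y q * a r * (of_nat (card {Z\<in>Smat q r. cZ Z = s}) * of_nat (chi n s \<sigma>)))"
    by (rule sum.swap)
  also have "\<dots> = (\<Sum>q\<in>?C. \<Sum>r\<in>?C. \<Sum>s\<in>?C. y q * a r * (of_nat (card {Z\<in>Smat q r. cZ Z = s}) * of_nat (chi n s \<sigma>)))"
    by (rule sum.cong[OF refl], rule sum.swap)
  also have "\<dots> = (\<Sum>q\<in>?C. \<Sum>r\<in>?C. y q * a r * of_nat (chi n q \<sigma> * chi n r \<sigma>))"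
    by (intro sum.cong refl) (simp only: sum_distrib_left[symmetric] inner_sum[OF _ \<sigma>])
  also have "\<dots> = desc_phi n y \<sigma> * desc_phi n a \<sigma>"
    unfolding desc_phi_def sum_product by (intro sum.cong refl) (simp add: mult_ac)
  finally show ?thesis .
qed

lemma phi_add: "desc_phi n (\<lambda>q. a q + b q) \<sigma> = desc_phi n a \<sigma> + desc_phi n b \<sigma>"
  by (simp add: desc_phi_def distrib_right sum.distrib)

lemma phi_smult: "desc_phi n (\<lambda>q. c * a q) \<sigma> = c * desc_phi n a \<sigma>"
  by (simp add: desc_phi_def sum_distrib_left mult.assoc)

lemma mult_carrier: "desc_mult n y (a :: nat list \<Rightarrow> 'k::field) \<in> desc_carrier n"
  unfolding desc_carrier_def
proof (intro CollectI allI impI)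
  fix s assume s: "s \<notin> compositions n"
  show "desc_mult n y a s = 0"
    unfolding desc_mult_def
  proof (intro sum.neutral ballI)
    fix q r assume q: "q \<in> compositions n" and "r \<in> compositions n"
    have e: "{Z\<in>Smat q r. cZ Z = s} = {}" using cZ_comp s q by blast
    show "y q * a r * of_nat (card {Z\<in>Smat q r. cZ Z = s}) = 0" unfolding e by simp
  qed
qed

theorem lemma2p2:
  fixes n p :: nat and x :: "nat list \<Rightarrow> 'k::{field,finite}"
  assumes "n \<ge> 1" and "prime p" and "card (UNIV :: 'k set) = p"
    and "x \<in> desc_radical n"
  shows "\<forall>\<sigma>. \<sigma> permutes {0..<n} \<longrightarrow> desc_phi n x \<sigma> = 0"
proof (intro allI impI)
  fix \<sigma> assume \<sigma>: "\<sigma> permutes {0..<n}"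
  have xC: "x \<in> desc_carrier n" using assms(4) by (simp add: desc_radical_def)
  show "desc_phi n x \<sigma> = 0"
  proof (cases "\<exists>a0\<in>desc_carrier n. desc_phi n a0 \<sigma> \<noteq> (0::'k)")
    case False
    then show ?thesis using xC by blast
  next
    case True
    then obtain a0 :: "nat list \<Rightarrow> 'k" where a0: "a0 \<in> desc_carrier n" "desc_phi n a0 \<sigma> \<noteq> 0" by blast
    define K where "K = {a \<in> desc_carrier n. desc_phi n a \<sigma> = (0::'k)}"
    have LK: "desc_left_ideal n K"
      unfolding desc_left_ideal_def
    proof (intro conjI ballI allI impI)
      show "K \<subseteq> desc_carrier n" by (auto simp: K_def)
      show "(\<lambda>q. 0) \<in> K" by (simp add: K_def desc_carrier_def desc_phi_def)
    next
      fix a b assume "a \<in> K" "b \<in> K"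
      then show "(\<lambda>q. a q + b q) \<in> K" by (simp add: K_def desc_carrier_def phi_add)
    next
      fix c a assume "a \<in> K"
      then show "(\<lambda>q. c * a q) \<in> K" by (simp add: K_def desc_carrier_def phi_smult)
    next
      fix y a :: "nat list \<Rightarrow> 'k" assume "y \<in> desc_carrier n" "a \<in> K"
      then show "desc_mult n y a \<in> K" by (simp add: K_def mult_carrier phi_mult[OF \<sigma>])
    qed
    have "desc_maximal_left_ideal n K"
      unfolding desc_maximal_left_ideal_def
    proof (intro conjI allI impI)
      show "desc_left_ideal n K" by (rule LK)
      show "K \<noteq> desc_carrier n" using a0 by (auto simp: K_def)
    next
      fix J assume J: "desc_left_ideal n J \<and> K \<subseteq> J"
      show "J = K \<or> J = desc_carrier n"
      proof (cases "J = K")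
        case True then show ?thesis by simp
      next
        case False
        then obtain b where b: "b \<in> J" "b \<notin> K" using J by blast
        have JC: "J \<subseteq> desc_carrier n" using J by (simp add: desc_left_ideal_def)
        have bC: "b \<in> desc_carrier n" and pb: "desc_phi n b \<sigma> \<noteq> 0" using b JC by (auto simp: K_def)
        have "desc_carrier n \<subseteq> J"
        proof
          fix y :: "nat list \<Rightarrow> 'k" assume yC: "y \<in> desc_carrier n"
          define c where "c = desc_phi n y \<sigma> / desc_phi n b \<sigma>"
          let ?y' = "\<lambda>q. y q + (- c) * b q"
          have "?y' \<in> desc_carrier n" using yC bC by (simp add: desc_carrier_def)
          moreover have "desc_phi n ?y' \<sigma> = 0"
          proof -
            have "desc_phi n ?y' \<sigma> = desc_phi n y \<sigma> + desc_phi n (\<lambda>q. (- c) * b q) \<sigma>" by (rule phi_add)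
            also have "\<dots> = desc_phi n y \<sigma> + (- c) * desc_phi n b \<sigma>" by (simp only: phi_smult)
            also have "\<dots> = 0" using pb by (simp add: c_def)
            finally show ?thesis .
          qed
          ultimately have y'J: "?y' \<in> J" using J by (auto simp: K_def)
          have cbJ: "(\<lambda>q. c * b q) \<in> J" using J b by (simp add: desc_left_ideal_def)
          have add: "\<forall>a\<in>J. \<forall>b\<in>J. (\<lambda>q. a q + b q) \<in> J" using J by (simp add: desc_left_ideal_def)
          have "(\<lambda>q. ?y' q + c * b q) \<in> J" using add[rule_format, OF y'J cbJ] .
          moreover have "(\<lambda>q. ?y' q + c * b q) = y" by (simp add: fun_eq_iff)
          ultimately show "y \<in> J" by simp
        qed
        then show ?thesis using JC by blast
      qed
    qed
    then have "x \<in> K" using assms(4) by (auto simp: desc_radical_def)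
    then show ?thesis by (simp add: K_def)
  qed
qed

end
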